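(* For every $x>0$, $$\int_0^\infty\frac{\sin^2t}{(t+x)^2}\,dt<\frac{1}{2x}\qquad\text{and}\qquad\int_0^\infty\frac{|\sin t|}{(t+x)^2}\,dt<\frac{2}{\pi x}.$$ *)

theory Defs
  imports "HOL-Analysis.Analysis"
begin

end

theory Submission
  imports Defs "HOL-Analysis.Analysis" "HOL-Real_Asymp.Real_Asymp"
begin

lemma alg0: fixes y z m p Fv Pv e :: real
  assumes "y \<noteq> 0" "z \<noteq> 0"
  shows "m / (y * y) +
        ((p - m) * y\<^sup>2 - Fv * (2 * y)) / y ^ 4 +
        (Fv * 2 * y ^ 3 - 6 * (Pv * y\<^sup>2)) / y ^ 6 +
        Pv * (e * 6) * z ^ 4 / z ^ 8 =
        p / y\<^sup>2 - 6 * Pv / y ^ 4 + e * 6 * Pv / z ^ 4"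
  using assms by (simp add: field_simps eval_nat_numeral)
lemma alg: fixes t x z m p Fv Pv e :: real
  assumes "t + x \<noteq> 0" "z \<noteq> 0"
  shows "m / ((t + x) * (t + x)) +
        ((p - m) * (t + x)\<^sup>2 - Fv * (2 * t + 2 * x)) / (t + x) ^ 4 +
        (Fv * 2 * (t + x) ^ 3 - 6 * (Pv * (t + x)\<^sup>2)) / (t + x) ^ 6 +
        Pv * (e * 6) * z ^ 4 / z ^ 8 =
        p / (t + x)\<^sup>2 - 6 * Pv / (t + x) ^ 4 + e * 6 * Pv / z ^ 4"
proof -
  have "2 * t + 2 * x = 2 * (t + x)" by simp
  then show ?thesis using alg0[OF assms, of m p Fv Pv e] by metis
qed

lemma period_bound:
  fixes \<phi> F P R f :: "real \<Rightarrow> real" and m x a e :: real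
  assumes x: "x > 0" and a: "a \<ge> 0"
    and dF: "\<And>u. (F has_real_derivative (\<phi> u - m)) (at u)"
    and dP: "\<And>u. (P has_real_derivative F u) (at u)"
    and dR: "\<And>u. (R has_real_derivative P u) (at u)"
    and cphi: "\<And>u. isCont \<phi> u"
    and cf: "\<And>t. isCont f t"
    and F0: "F 0 = 0" "F pi = 0" and P0: "P 0 = 0" "P pi = 0"
    and Pneg: "\<And>u. 0 \<le> u \<Longrightarrow> u \<le> pi \<Longrightarrow> P u \<le> 0"
    and fper: "\<And>t. a \<le> t \<Longrightarrow> t \<le> a + pi \<Longrightarrow> f t = \<phi> (t - a)"
    and e: "e = 0 \<or> (e = 1 \<and> a = 0)"
  shows "(LBINT t=a..a+pi. f t / (t+x)^2) \<le> m * (1/(a+x) - 1/(a+pi+x)) + e * 6 * (R pi - R 0) / (pi+x)^4"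
proof -
  define H where "H t = - m/(t+x) + F (t-a)/(t+x)^2 + 2*P (t-a)/(t+x)^3 + e*6*R (t-a)/(pi+x)^4" for t
  define K where "K t = \<phi> (t-a)/(t+x)^2 - 6*P (t-a)/(t+x)^4 + e*6*P (t-a)/(pi+x)^4" for t
  have pos: "t + x > 0" if "a \<le> t" for t using that a x by linarith
  have dH: "(H has_real_derivative K t) (at t)" if "a \<le> t" for t
  proof -
    have tx: "t + x \<noteq> 0" using pos[OF that] by simp
    have px: "pi + x \<noteq> 0" using x pi_gt_zero by linarith
    show ?thesis
      unfolding H_def[abs_def] K_def
      apply (rule derivative_eq_intros DERIV_chain2[OF dF] DERIV_chain2[OF dP] DERIV_chain2[OF dR] | simp add: tx px)+
      using tx px by (rule alg)
  qed
  have cP: "isCont P u" for u using dP DERIV_isCont by blast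
  have cR: "isCont R u" for u using dR DERIV_isCont by blast
  have cK: "isCont K t" if "a \<le> t" for t
  proof -
    have tx: "t + x \<noteq> 0" using pos[OF that] by simp
    show ?thesis unfolding K_def[abs_def]
      using x tx pi_gt_zero \<open>0 < x\<close> add_pos_pos[OF pi_gt_zero x]
      by (intro continuous_intros isCont_o2[OF _ cphi] isCont_o2[OF _ cP]) (auto)
  qed
  have cg: "isCont (\<lambda>t. f t / (t+x)^2) t" if "a \<le> t" for t
    using pos[OF that] by (intro continuous_intros cf) auto
  have intK: "(LBINT t=a..a+pi. K t) = H (a+pi) - H a"
    apply (rule interval_integral_FTC_finite)
    subgoal using cK by (intro continuous_at_imp_continuous_on) auto
    subgoal for t using dH[of t]
      by (auto simp: has_real_derivative_iff_has_vector_derivative[symmetric] intro: has_field_derivative_at_within)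
    done
  have Hval: "H (a+pi) - H a = m * (1/(a+x) - 1/(a+pi+x)) + e * 6 * (R pi - R 0) / (pi+x)^4"
    unfolding H_def using F0 P0 by (simp add: field_simps) (simp add: diff_divide_distrib)
  have le: "f t / (t+x)^2 \<le> K t" if "a \<le> t" "t \<le> a + pi" for t
  proof -
    have u: "0 \<le> t - a" "t - a \<le> pi" using that by auto
    have Pu: "P (t-a) \<le> 0" using Pneg[OF u] .
    have "e * 6 * P (t-a)/(pi+x)^4 \<ge> 6*P(t-a)/(t+x)^4"
    proof (cases "e = 0")
      case True then show ?thesis using Pu pos[OF that(1)] by (simp add: divide_nonpos_pos)
    next
      case False
      then have "e = 1" "a = 0" using e by auto
      have "(t+x)^4 \<le> (pi+x)^4" using that pos[OF that(1)] \<open>a = 0\<close>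
        by (intro power_mono) auto
      then have "1/(pi+x)^4 \<le> 1/(t+x)^4" using pos[OF that(1)] add_pos_pos[OF pi_gt_zero x]
        by (intro divide_left_mono) (auto intro!: mult_pos_pos zero_less_power)
      from mult_left_mono_neg[OF this, of "6 * P(t-a)"] Pu \<open>e = 1\<close>
      show ?thesis by simp
    qed
    then show ?thesis unfolding K_def using fper[OF that] by simp
  qed
  have "(LBINT t=a..a+pi. f t / (t+x)^2) \<le> (LBINT t=a..a+pi. K t)"
    unfolding interval_integral_Icc[of a "a+pi", OF order.strict_implies_order[OF less_add_same_cancel1[THEN iffD2, OF pi_gt_zero]]]
    apply (rule set_integral_mono)
    subgoal using cg by (intro borel_integrable_atLeastAtMost' continuous_at_imp_continuous_on) auto
    subgoal using cK by (intro borel_integrable_atLeastAtMost' continuous_at_imp_continuous_on) auto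
    subgoal using le by auto
    done
  then show ?thesis using intK Hval by simp
qed

lemma g_int:
  fixes x :: real assumes x: "x > 0"
  shows "set_integrable lborel {0..} (\<lambda>t. 1 / (t + x) ^ 2)"
proof -
  let ?F = "\<lambda>t::real. - 1 / (t + x)"
  have "set_integrable lborel (einterval 0 \<infinity>) (\<lambda>t. 1 / (t + x) ^ 2)"
  proof (rule interval_integral_FTC_nonneg(1)[where F="?F" and A="-1/x" and B=0])
    show "\<And>t. 0 < ereal t \<Longrightarrow> ereal t < \<infinity> \<Longrightarrow> (?F has_real_derivative 1 / (t + x) ^ 2) (at t)"
      using x by (auto intro!: derivative_eq_intros simp: power2_eq_square field_simps)
    show "\<And>t. 0 < ereal t \<Longrightarrow> ereal t < \<infinity> \<Longrightarrow> isCont (\<lambda>t. 1 / (t + x) ^ 2) t"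
      using x by (auto intro!: continuous_intros)
    show "((?F \<circ> real_of_ereal) \<longlongrightarrow> -1/x) (at_right 0)"
      using x by (auto simp: zero_ereal_def ereal_tendsto_simps intro!: tendsto_eq_intros)
    show "((?F \<circ> real_of_ereal) \<longlongrightarrow> 0) (at_left \<infinity>)"
      unfolding ereal_tendsto_simps
      by real_asymp
  qed auto
  then have "set_integrable lborel {0<..} (\<lambda>t. 1 / (t + x) ^ 2)" by (simp add: zero_ereal_def)
  then show ?thesis
    by (subst set_integrable_discrete_difference[where X="{0}"]) auto
qed

lemma main_gen:
  fixes \<phi> F P R f :: "real \<Rightarrow> real" and m x :: real
  assumes x: "x > 0" and m: "m \<ge> 0"
    and dF: "\<And>u. (F has_real_derivative (\<phi> u - m)) (at u)"
    and dP: "\<And>u. (P has_real_derivative F u) (at u)"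
    and dR: "\<And>u. (R has_real_derivative P u) (at u)"
    and cphi: "\<And>u. isCont \<phi> u"
    and cf: "\<And>t. isCont f t"
    and F0: "F 0 = 0" "F pi = 0" and P0: "P 0 = 0" "P pi = 0"
    and Pneg: "\<And>u. 0 \<le> u \<Longrightarrow> u \<le> pi \<Longrightarrow> P u \<le> 0"
    and Rneg: "R pi - R 0 < 0"
    and fper: "\<And>(k::nat) t. real k * pi \<le> t \<Longrightarrow> t \<le> real k * pi + pi \<Longrightarrow> f t = \<phi> (t - real k * pi)"
    and fb: "\<And>t. 0 \<le> f t" "\<And>t. f t \<le> 1"
  shows "set_integrable lborel {0..} (\<lambda>t. f t / (t+x)^2) \<and> (LINT t:{0..}|lborel. f t / (t+x)^2) < m / x"
proof -
  define \<delta> where "\<delta> = - 6 * (R pi - R 0) / (pi+x)^4"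
  have px: "pi + x > 0" using x pi_gt_zero by linarith
  have \<delta>: "\<delta> > 0" unfolding \<delta>_def using Rneg px by (simp add: divide_pos_pos)
  define S where "S N = (LBINT t=0..real N * pi. f t / (t+x)^2)" for N :: nat
  have cg: "isCont (\<lambda>t. f t / (t+x)^2) t" if "0 \<le> t" for t
    using that x by (intro continuous_intros cf) auto
  have piece: "(LBINT t=real k * pi..real k * pi+pi. f t / (t+x)^2)
     \<le> m * (1/(real k * pi+x) - 1/(real k * pi+pi+x)) - (if k = 0 then \<delta> else 0)" for k :: nat
  proof -
    have "(LBINT t=real k * pi..real k * pi+pi. f t / (t+x)^2)
     \<le> m * (1/(real k * pi+x) - 1/(real k * pi+pi+x)) + (if k = 0 then 1 else 0) * 6 * (R pi - R 0) / (pi+x)^4"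
      by (rule period_bound[OF x _ dF dP dR cphi cf F0 P0 Pneg fper]) auto
    then show ?thesis unfolding \<delta>_def by (cases "k = 0") (auto simp: diff_divide_distrib)
  qed
  have Sbound: "S N \<le> m * (1/x - 1/(real N * pi + x)) - (if N = 0 then 0 else \<delta>)" for N
  proof (induction N)
    case 0 then show ?case by (simp add: S_def zero_ereal_def)
  next
    case (Suc N)
    have "S (Suc N) = S N + (LBINT t=real N * pi..real N * pi+pi. f t / (t+x)^2)"
      unfolding S_def
      apply (subst interval_integral_sum[symmetric, where b="ereal (real N * pi)"])
      subgoal
      proof -
        have o1: "(0::ereal) \<le> ereal (real N * pi)" by simp
        have o2: "ereal (real N * pi) \<le> ereal (real (Suc N) * pi)" by simp
        have i: "interval_lebesgue_integrable lborel (ereal 0) (ereal (real (Suc N) * pi)) (\<lambda>t. f t / (t+x)^2)"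
          by (rule interval_integrable_isCont) (rule cg, simp)
        show ?thesis using i o1 o2 by (simp add: min_absorb1 max_absorb2 zero_ereal_def)
      qed
      subgoal by (simp add: algebra_simps)
      done
    also have "\<dots> \<le> m * (1/x - 1/(real N * pi + x)) - (if N = 0 then 0 else \<delta>)
        + (m * (1/(real N * pi+x) - 1/(real N * pi+pi+x)) - (if N = 0 then \<delta> else 0))"
      using Suc piece[of N] by linarith
    also have "\<dots> = m * (1/x - 1/(real (Suc N) * pi + x)) - (if Suc N = 0 then 0 else \<delta>)"
      by (simp add: algebra_simps)
    finally show ?case .
  qed
  have SB: "S N \<le> m / x - \<delta>" if "N \<ge> 1" for N
  proof -
    have "m * (1/(real N * pi + x)) \<ge> 0" using m x by simp
    then show ?thesis using Sbound[of N] that by (simp add: right_diff_distrib)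
  qed
  have int: "set_integrable lborel {0..} (\<lambda>t. f t / (t+x)^2)"
  proof (rule set_integrable_bound[OF g_int[OF x]])
    have "(\<lambda>t. f t / (t+x)^2) \<in> borel_measurable borel"
    proof -
      have "f \<in> borel_measurable borel"
        using cf by (intro borel_measurable_continuous_onI continuous_at_imp_continuous_on) auto
      then show ?thesis by measurable
    qed
    then show "set_borel_measurable lborel {0..} (\<lambda>t. f t / (t+x)^2)"
      unfolding set_borel_measurable_def by measurable
    show "AE t in lborel. t \<in> {0..} \<longrightarrow> norm (f t / (t+x)^2) \<le> norm (1 / (t+x)^2)"
      using fb by (auto intro!: divide_right_mono)
  qed
  have lim: "((\<lambda>b. LINT t:{0..b}|lborel. f t / (t+x)^2) \<longlongrightarrow> (LINT t:{0..}|lborel. f t / (t+x)^2)) at_top"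
    by (rule tendsto_set_lebesgue_integral_at_top[OF _ int]) auto
  have seq: "filterlim (\<lambda>N::nat. real N * pi) at_top sequentially"
    by real_asymp
  have lim2: "S \<longlonglongrightarrow> (LINT t:{0..}|lborel. f t / (t+x)^2)"
  proof -
    have "(\<lambda>N. LINT t:{0..real N * pi}|lborel. f t / (t+x)^2) \<longlonglongrightarrow> (LINT t:{0..}|lborel. f t / (t+x)^2)"
      by (rule filterlim_compose[OF lim seq])
    moreover have "S N = (LINT t:{0..real N * pi}|lborel. f t / (t+x)^2)" for N
      unfolding S_def zero_ereal_def by (rule interval_integral_Icc) simp
    then have "S = (\<lambda>N. LINT t:{0..real N * pi}|lborel. f t / (t+x)^2)" by (intro ext)
    ultimately show ?thesis by simp
  qed
  have "(LINT t:{0..}|lborel. f t / (t+x)^2) \<le> m / x - \<delta>"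
    by (rule LIMSEQ_le_const2[OF lim2]) (use SB in auto)
  then show ?thesis using int \<delta> by simp
qed

lemma cos_lower: fixes u :: real assumes "u \<ge> 0" shows "1 - u^2/2 \<le> cos u"
proof -
  have "(\<lambda>u. cos u - 1 + u^2/2) 0 \<le> (\<lambda>u. cos u - 1 + u^2/2) u"
  proof (rule DERIV_nonneg_imp_nondecreasing[OF assms])
    fix v :: real assume "0 \<le> v" "v \<le> u"
    show "\<exists>y. ((\<lambda>u. cos u - 1 + u^2/2) has_real_derivative y) (at v) \<and> 0 \<le> y"
      by (rule exI[of _ "- sin v + v"], intro conjI) (auto intro!: derivative_eq_intros simp: sin_x_le_x[OF \<open>0 \<le> v\<close>])
  qed
  then show ?thesis by simp
qed

lemma sin_lower: fixes u :: real assumes "u \<ge> 0" shows "u - u^3/6 \<le> sin u"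
proof -
  have "(\<lambda>u. sin u - u + u^3/6) 0 \<le> (\<lambda>u. sin u - u + u^3/6) u"
  proof (rule DERIV_nonneg_imp_nondecreasing[OF assms])
    fix v :: real assume "0 \<le> v" "v \<le> u"
    show "\<exists>y. ((\<lambda>u. sin u - u + u^3/6) has_real_derivative y) (at v) \<and> 0 \<le> y"
      using cos_lower[OF \<open>0 \<le> v\<close>]
      by (intro exI[of _ "cos v - 1 + v^2/2"] conjI) (auto intro!: derivative_eq_intros)
  qed
  then show ?thesis by simp
qed

lemma pi_sq_lt: "pi^2 < 12"
proof -
  have p: "pi \<le> 3.2" using pi_approx by simp
  have "pi * pi \<le> 3.2 * 3.2" by (rule mult_mono[OF p p]) auto
  then show ?thesis by (simp add: power2_eq_square)
qed

lemma P_abs_neg: fixes u :: real assumes "0 \<le> u" "u \<le> pi" shows "u - sin u - u^2/pi \<le> 0"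
proof -
  have key: "v - sin v - v^2/pi \<le> 0" if "0 \<le> v" "v \<le> 6/pi" for v
  proof -
    have "v - v^3/6 \<le> sin v" using sin_lower[OF that(1)] .
    moreover have "v^2/pi \<ge> v^3/6"
    proof -
      have "v * pi \<le> 6" using that(2) pi_gt_zero by (simp add: field_simps)
      then have "v^2 * (v * pi) \<le> v^2 * 6" by (intro mult_left_mono) auto
      then show ?thesis using pi_gt_zero by (simp add: field_simps power2_eq_square power3_eq_cube)
    qed
    ultimately show ?thesis by linarith
  qed
  have h: "pi/2 \<le> 6/pi" using pi_sq_lt pi_gt_zero by (simp add: field_simps power2_eq_square)
  show ?thesis
  proof (cases "u \<le> 6/pi")
    case True then show ?thesis using key assms by auto
  next
    case False
    then have "pi - u \<le> 6/pi" "0 \<le> pi - u" using h assms by auto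
    from key[OF this(2,1)] have "(pi - u) - sin u - (pi-u)^2/pi \<le> 0" by (simp add: sin_diff)
    moreover have "(pi - u) - (pi-u)^2/pi = u - u^2/pi" using pi_gt_zero
      by (simp add: field_simps power2_eq_square)
    ultimately show ?thesis by linarith
  qed
qed

lemma neg1_sq: "((-1::real)^k)^2 = 1"
  by (induct k) (auto simp: power2_eq_square)

lemma sin_shift: "sin (t - real k * pi) = (-1)^k * sin t"
  by (simp add: sin_diff)

theorem mainTheorem7:
  fixes x :: real
  assumes "x > 0"
  shows "set_integrable lborel {0..} (\<lambda>t. sin t ^ 2 / (t + x) ^ 2)
       \<and> (LINT t:{0..}|lborel. sin t ^ 2 / (t + x) ^ 2) < 1 / (2 * x)
       \<and> set_integrable lborel {0..} (\<lambda>t. \<bar>sin t\<bar> / (t + x) ^ 2)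
       \<and> (LINT t:{0..}|lborel. \<bar>sin t\<bar> / (t + x) ^ 2) < 2 / (pi * x)"
proof -
  have A: "set_integrable lborel {0..} (\<lambda>t. sin t ^ 2 / (t + x) ^ 2)
       \<and> (LINT t:{0..}|lborel. sin t ^ 2 / (t + x) ^ 2) < (1/2) / x"
  proof (rule main_gen[where \<phi>="\<lambda>u. sin u ^ 2" and F="\<lambda>u. - sin (2*u) / 4"
        and P="\<lambda>u. (cos (2*u) - 1) / 8" and R="\<lambda>u. sin (2*u) / 16 - u / 8"])
    show "x > 0" by fact
    show "(0::real) \<le> 1/2" by simp
    show "((\<lambda>u. - sin (2*u) / 4) has_real_derivative (sin u ^ 2 - 1/2)) (at u)" for u
    proof -
      have "((\<lambda>u. - sin (2*u) / 4) has_real_derivative (- cos (2*u) / 2)) (at u)"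
        by (rule derivative_eq_intros refl)+
          (auto simp: field_simps)
      moreover have "- cos (2*u) / 2 = sin u ^ 2 - 1/2" by (simp add: cos_double_sin)
      ultimately show ?thesis by simp
    qed
    show "((\<lambda>u. (cos (2*u) - 1) / 8) has_real_derivative (- sin (2*u) / 4)) (at u)" for u
      by (rule derivative_eq_intros refl)+ (auto simp: field_simps)
    show "((\<lambda>u. sin (2*u) / 16 - u / 8) has_real_derivative ((cos (2*u) - 1) / 8)) (at u)" for u
      by (auto intro!: derivative_eq_intros simp: field_simps)
    show "isCont (\<lambda>u. sin u ^ 2) u" for u :: real using DERIV_isCont[OF DERIV_sin] by (intro continuous_intros)
    show "isCont (\<lambda>u. sin u ^ 2) u" for u :: real using DERIV_isCont[OF DERIV_sin] by (intro continuous_intros)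
    show "- sin (2*0) / 4 = (0::real)" by simp
    show "- sin (2*pi) / 4 = (0::real)" by simp
    show "(cos (2*0) - 1) / 8 = (0::real)" by simp
    show "(cos (2*pi) - 1) / 8 = (0::real)" by simp
    show "(cos (2*u) - 1) / 8 \<le> 0" for u :: real by simp
    show "(sin (2*pi) / 16 - pi / 8) - (sin (2*0) / 16 - 0 / 8) < 0" using pi_gt_zero by simp
    show "sin t ^ 2 = sin (t - real k * pi) ^ 2" for t k
      by (simp add: sin_shift power_mult_distrib neg1_sq)
    show "0 \<le> sin t ^ 2" for t :: real by simp
    show "sin t ^ 2 \<le> 1" for t :: real by (simp add: abs_square_le_1)
  qed
  have B: "set_integrable lborel {0..} (\<lambda>t. \<bar>sin t\<bar> / (t + x) ^ 2)
       \<and> (LINT t:{0..}|lborel. \<bar>sin t\<bar> / (t + x) ^ 2) < (2/pi) / x"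
  proof (rule main_gen[where \<phi>="\<lambda>u. sin u" and F="\<lambda>u. 1 - cos u - 2*u/pi"
        and P="\<lambda>u. u - sin u - u^2/pi" and R="\<lambda>u. u^2/2 + cos u - u^3/(3*pi)"])
    show "x > 0" by fact
    show "(0::real) \<le> 2/pi" by simp
    show "((\<lambda>u. 1 - cos u - 2*u/pi) has_real_derivative (sin u - 2/pi)) (at u)" for u
      by (auto intro!: derivative_eq_intros simp: field_simps)
    show "((\<lambda>u. u - sin u - u^2/pi) has_real_derivative (1 - cos u - 2*u/pi)) (at u)" for u
      by (auto intro!: derivative_eq_intros simp: field_simps)
    show "((\<lambda>u. u^2/2 + cos u - u^3/(3*pi)) has_real_derivative (u - sin u - u^2/pi)) (at u)" for u
      by (auto intro!: derivative_eq_intros simp: field_simps power2_eq_square)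
    show "isCont (\<lambda>u. sin u) u" for u :: real using DERIV_isCont[OF DERIV_sin] by simp
    show "isCont (\<lambda>u. \<bar>sin u\<bar>) u" for u :: real using DERIV_isCont[OF DERIV_sin] by (intro continuous_intros)
    show "1 - cos 0 - 2*0/pi = (0::real)" by simp
    show "1 - cos pi - 2*pi/pi = (0::real)" by simp
    show "0 - sin 0 - 0^2/pi = (0::real)" by simp
    show "pi - sin pi - pi^2/pi = (0::real)" by (simp add: power2_eq_square)
    show "u - sin u - u^2/pi \<le> 0" if "0 \<le> u" "u \<le> pi" for u :: real using P_abs_neg that .
    show "(pi^2/2 + cos pi - pi^3/(3*pi)) - (0^2/2 + cos 0 - 0^3/(3*pi)) < 0"
      using pi_sq_lt pi_gt_zero by (simp add: power2_eq_square power3_eq_cube)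
    show "\<bar>sin t\<bar> = sin (t - real k * pi)" if "real k * pi \<le> t" "t \<le> real k * pi + pi" for t k
    proof -
      have "0 \<le> sin (t - real k * pi)" using that by (intro sin_ge_zero) auto
      moreover have "\<bar>(-1::real)^k * sin t\<bar> = \<bar>sin t\<bar>" by (simp add: abs_mult)
      ultimately show ?thesis unfolding sin_shift by (metis abs_of_nonneg)
    qed
    show "0 \<le> \<bar>sin t\<bar>" for t :: real by simp
    show "\<bar>sin t\<bar> \<le> 1" for t :: real by simp
  qed
  have e1: "(1/2) / x = 1 / (2 * x)" by simp
  have e2: "(2/pi) / x = 2 / (pi * x)" by simp
  show ?thesis using A B unfolding e1 e2 by blast
qed

end
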